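(* Every atomic flow is the atomic flow associated with some $\mathsf{SKS}$ derivation.
   Context: Formulae are built from the units $\mathsf f$ and $\mathsf t$, atoms $a,b,\dots$, disjunction $[\alpha\vee\beta]$ and conjunction $(\alpha\wedge\beta)$; on atoms there is an involution $a\mapsto\bar a$ with $\bar a\neq a$. A context $\xi\{\ \}$ is a formula with a hole. An inference step of a rule $\alpha/\beta$ rewrites $\xi\{\alpha\}$ into $\xi\{\beta\}$ for an arbitrary context $\xi$. A derivation is a finite chain of inference steps. System $\mathsf{SKS}$ consists of: interaction $\mathsf{ai}{\downarrow}$: $\mathsf t/[a\vee\bar a]$; weakening $\mathsf{aw}{\downarrow}$: $\mathsf f/a$; contraction $\mathsf{ac}{\downarrow}$: $[a\vee a]/a$; cut $\mathsf{ai}{\uparrow}$: $(a\wedge\bar a)/\mathsf f$; coweakening $\mathsf{aw}{\uparrow}$: $a/\mathsf t$; cocontraction $\mathsf{ac}{\uparrow}$: $a/(a\wedge a)$; switch $(\alpha\wedge[\beta\vee\gamma])/[(\alpha\wedge\beta)\vee\gamma]$; medial $[(\alpha\wedge\beta)\vee(\gamma\wedge\delta)]/([\alpha\vee\gamma]\wedge[\beta\vee\delta])$; and $\gamma/\delta$ whenever $\gamma=\delta$ is (either direction of) an instance of commutativity or associativity of $\vee$, $\wedge$, $[\alpha\vee\mathsf f]=\alpha$, $(\alpha\wedge\mathsf t)=\alpha$, $[\mathsf t\vee\mathsf t]=\mathsf t$, $(\mathsf f\wedge\mathsf f)=\mathsf f$. An atomic flow is a tuple $(V,E,\eta,up,lo)$: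 finite sets $V$ (vertices) and $E$ (edges), a labelling $\eta$ of vertices by interaction, cut, weakening, coweakening, contraction or cocontraction, and maps $up:E\to V\cup\{\top\}$, $lo:E\to V\cup\{\bot\}$ with $\top,\bot\notin V$. Upper edges of a vertex $\nu$ are those with $lo(\epsilon)=\nu$, lower edges those with $up(\epsilon)=\nu$. The (upper, lower) edge numbers are $(0,2)$ for interaction, $(2,0)$ for cut, $(0,1)$ for weakening, $(1,0)$ for coweakening, $(2,1)$ for contraction, $(1,2)$ for cocontraction; the directed graph has no directed cycle; and there is $\pi:E\to\{+,-\}$ giving all edges of each (co)contraction vertex the same sign and the two edges of each interaction/cut vertex different signs. Flows are considered up to isomorphism. The atomic flow associated with an $\mathsf{SKS}$ derivation $\Phi$: each atom occurrence of $\Phi$ is mapped to an edge (surjectively); in each inference step, occurrences in the context (and, for switch, medial and $=$, in the subformulae instantiating $\alpha,\beta,\gamma,\delta$) are mapped to the same edges in the step's premiss and conclusion; each step of one of the six atomic rules gives a vertex labelled by that rule whose upper edges are the atom occurrences of the redex in the step's premiss and whose lower edges are those in the redex of the step's conclusion; atom occurrences in the premiss of $\Phi$ are edges with $up=\top$, those in the conclusion edges with $lo=\bot$. *)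

theory Defs
  imports Main
begin

text \<open>Atoms: a countable supply of atoms; atom (n, True) is a, atom (n, False) its dual.\<close>
type_synonym atom = "nat \<times> bool"

definition bar :: "atom \<Rightarrow> atom" where
  "bar a = (fst a, \<not> snd a)"

text \<open>Formulae whose atom occurrences carry an edge label (the edge of the atomic flow
  the occurrence is mapped to).\<close>
datatype aform = FF | TT | At atom nat | Dis aform aform | Con aform aform

fun labs :: "aform \<Rightarrow> nat list" where
  "labs FF = []"
| "labs TT = []"
| "labs (At a e) = [e]"
| "labs (Dis A B) = labs A @ labs B"
| "labs (Con A B) = labs A @ labs B"

datatype ctx = Hole | DisL ctx aform | DisR aform ctx | ConL ctx aform | ConR aform ctx

fun fill :: "ctx \<Rightarrow> aform \<Rightarrow> aform" where
  "fill Hole A = A"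
| "fill (DisL c B) A = Dis (fill c A) B"
| "fill (DisR B c) A = Dis B (fill c A)"
| "fill (ConL c B) A = Con (fill c A) B"
| "fill (ConR B c) A = Con B (fill c A)"

text \<open>Equations (one direction; both directions are allowed as rules).\<close>
inductive eqn :: "aform \<Rightarrow> aform \<Rightarrow> bool" where
  comm_dis: "eqn (Dis A B) (Dis B A)"
| comm_con: "eqn (Con A B) (Con B A)"
| assoc_dis: "eqn (Dis (Dis A B) C) (Dis A (Dis B C))"
| assoc_con: "eqn (Con (Con A B) C) (Con A (Con B C))"
| unit_dis: "eqn (Dis A FF) A"
| unit_con: "eqn (Con A TT) A"
| tt: "eqn (Dis TT TT) TT"
| ff: "eqn (Con FF FF) FF"

text \<open>Non-atomic rules: occurrences in the instantiating subformulae keep their labels.\<close>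
inductive nonatomic :: "aform \<Rightarrow> aform \<Rightarrow> bool" where
  switch: "nonatomic (Con A (Dis B C)) (Dis (Con A B) C)"
| medial: "nonatomic (Dis (Con A B) (Con C D)) (Con (Dis A C) (Dis B D))"
| eq_fw: "eqn A B \<Longrightarrow> nonatomic A B"
| eq_bw: "eqn B A \<Longrightarrow> nonatomic A B"

datatype rule_kind = Interaction | Cut | Weakening | Coweakening | Contraction | Cocontraction

inductive atomic_rule :: "rule_kind \<Rightarrow> aform \<Rightarrow> aform \<Rightarrow> bool" where
  ai_down: "atomic_rule Interaction TT (Dis (At a e1) (At (bar a) e2))"
| aw_down: "atomic_rule Weakening FF (At a e)"
| ac_down: "atomic_rule Contraction (Dis (At a e1) (At a e2)) (At a e3)"
| ai_up: "atomic_rule Cut (Con (At a e1) (At (bar a) e2)) FF"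
| aw_up: "atomic_rule Coweakening (At a e) TT"
| ac_up: "atomic_rule Cocontraction (At a e) (Con (At a e1) (At a e2))"

text \<open>A derivation is a list of formulae fs = [phi_0, ..., phi_n] together with the list ks
  of the rules of its n steps (None for switch/medial/equations, Some k for an atomic rule k).
  Labels are distinct within each formula; occurrences in the context (and in the instantiated
  subformulae of non-atomic rules) keep their labels; the atom occurrences of the redex in the
  conclusion of an atomic step get fresh labels (new edges).\<close>
definition sks_derivation :: "aform list \<Rightarrow> rule_kind option list \<Rightarrow> bool" where
  "sks_derivation fs ks \<longleftrightarrow>
     fs \<noteq> [] \<and> length fs = Suc (length ks) \<and>
     (\<forall>j < length fs. distinct (labs (fs ! j))) \<and>
     (\<forall>i < length ks.
        (ks ! i = None \<longrightarrow>
           (\<exists>c A B. fs ! i = fill c A \<and> fs ! Suc i = fill c B \<and> nonatomic A B)) \<and>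
        (\<forall>k. ks ! i = Some k \<longrightarrow>
           (\<exists>c A B. fs ! i = fill c A \<and> fs ! Suc i = fill c B \<and> atomic_rule k A B \<and>
              (\<forall>j \<le> i. \<forall>e \<in> set (labs B). e \<notin> set (labs (fs ! j))))))"

text \<open>up e = None means up(e) = top, lo e = None means lo(e) = bottom.\<close>
record ('v, 'e) flow =
  fV :: "'v set"
  fE :: "'e set"
  eta :: "'v \<Rightarrow> rule_kind"
  up :: "'e \<Rightarrow> 'v option"
  lo :: "'e \<Rightarrow> 'v option"

fun edge_numbers :: "rule_kind \<Rightarrow> nat \<times> nat" where
  "edge_numbers Interaction = (0, 2)"
| "edge_numbers Cut = (2, 0)"
| "edge_numbers Weakening = (0, 1)"
| "edge_numbers Coweakening = (1, 0)"
| "edge_numbers Contraction = (2, 1)"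
| "edge_numbers Cocontraction = (1, 2)"

definition upper_edges :: "('v, 'e) flow \<Rightarrow> 'v \<Rightarrow> 'e set" where
  "upper_edges F v = {e \<in> fE F. lo F e = Some v}"

definition lower_edges :: "('v, 'e) flow \<Rightarrow> 'v \<Rightarrow> 'e set" where
  "lower_edges F v = {e \<in> fE F. up F e = Some v}"

definition flow_graph :: "('v, 'e) flow \<Rightarrow> ('v \<times> 'v) set" where
  "flow_graph F = {(u, w). \<exists>e \<in> fE F. up F e = Some u \<and> lo F e = Some w}"

definition atomic_flow :: "('v, 'e) flow \<Rightarrow> bool" where
  "atomic_flow F \<longleftrightarrow>
     finite (fV F) \<and> finite (fE F) \<and>
     (\<forall>e \<in> fE F. (up F e = None \<or> the (up F e) \<in> fV F) \<and>
                  (lo F e = None \<or> the (lo F e) \<in> fV F)) \<and>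
     (\<forall>v \<in> fV F. card (upper_edges F v) = fst (edge_numbers (eta F v)) \<and>
                  card (lower_edges F v) = snd (edge_numbers (eta F v))) \<and>
     acyclic (flow_graph F) \<and>
     (\<exists>pol :: 'e \<Rightarrow> bool.
        \<forall>v \<in> fV F.
          (eta F v \<in> {Contraction, Cocontraction} \<longrightarrow>
             (\<forall>e \<in> upper_edges F v \<union> lower_edges F v.
                \<forall>e' \<in> upper_edges F v \<union> lower_edges F v. pol e = pol e')) \<and>
          (eta F v = Interaction \<longrightarrow>
             (\<forall>e \<in> lower_edges F v. \<forall>e' \<in> lower_edges F v. e \<noteq> e' \<longrightarrow> pol e \<noteq> pol e')) \<and>
          (eta F v = Cut \<longrightarrow>
             (\<forall>e \<in> upper_edges F v. \<forall>e' \<in> upper_edges F v. e \<noteq> e' \<longrightarrow> pol e \<noteq> pol e')))"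

definition flow_iso :: "('v, 'e) flow \<Rightarrow> ('w, 'd) flow \<Rightarrow> bool" where
  "flow_iso F G \<longleftrightarrow>
     (\<exists>f g. bij_betw f (fV F) (fV G) \<and> bij_betw g (fE F) (fE G) \<and>
        (\<forall>v \<in> fV F. eta G (f v) = eta F v) \<and>
        (\<forall>e \<in> fE F. up G (g e) = map_option f (up F e) \<and> lo G (g e) = map_option f (lo F e)))"

definition flow_of :: "aform list \<Rightarrow> rule_kind option list \<Rightarrow> (nat, nat) flow" where
  "flow_of fs ks =
     \<lparr> fV = {i. i < length ks \<and> ks ! i \<noteq> None},
       fE = (\<Union>j < length fs. set (labs (fs ! j))),
       eta = (\<lambda>i. the (ks ! i)),
       up = (\<lambda>e. if e \<in> set (labs (fs ! 0)) then None
                 else Some (LEAST i. i < length ks \<and> e \<notin> set (labs (fs ! i))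
                                     \<and> e \<in> set (labs (fs ! Suc i)))),
       lo = (\<lambda>e. if e \<in> set (labs (last fs)) then None
                 else Some (LEAST i. i < length ks \<and> e \<in> set (labs (fs ! i))
                                     \<and> e \<notin> set (labs (fs ! Suc i)))) \<rparr>"

end

theory Submission
  imports Defs "HOL-Library.Multiset"
begin


lemma mset_fill: "mset (labs (fill c X)) = mset (labs (fill c FF)) + mset (labs X)"
  by (induction c) (auto simp: ac_simps)

lemma set_fill: "set (labs (fill c X)) = set (labs (fill c FF)) \<union> set (labs X)"
  by (metis mset_fill set_mset_mset set_mset_union)

lemma eqn_mset: "eqn X Y \<Longrightarrow> mset (labs X) = mset (labs Y)"
  by (induction rule: eqn.induct) (auto simp: ac_simps)

lemma nonatomic_mset: "nonatomic X Y \<Longrightarrow> mset (labs X) = mset (labs Y)"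
  by (induction rule: nonatomic.induct) (auto simp: ac_simps eqn_mset)

definition ns :: "aform \<Rightarrow> aform \<Rightarrow> bool" where
  "ns A B \<longleftrightarrow> (\<exists>c X Y. A = fill c X \<and> B = fill c Y \<and> nonatomic X Y)"

lemma ns_mset: "ns A B \<Longrightarrow> mset (labs A) = mset (labs B)"
  unfolding ns_def by (metis mset_fill nonatomic_mset)

lemma nss_mset: "ns\<^sup>*\<^sup>* A B \<Longrightarrow> mset (labs A) = mset (labs B)"
  by (induction rule: rtranclp_induct) (auto dest: ns_mset)

fun cc :: "ctx \<Rightarrow> ctx \<Rightarrow> ctx" where
  "cc Hole c = c"
| "cc (DisL d B) c = DisL (cc d c) B"
| "cc (DisR B d) c = DisR B (cc d c)"
| "cc (ConL d B) c = ConL (cc d c) B"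
| "cc (ConR B d) c = ConR B (cc d c)"

lemma fill_cc: "fill (cc d c) X = fill d (fill c X)"
  by (induction d) auto

lemma ns_ctx: "ns A B \<Longrightarrow> ns (fill d A) (fill d B)"
  unfolding ns_def by (metis fill_cc)

lemma nss_ctx: "ns\<^sup>*\<^sup>* A B \<Longrightarrow> ns\<^sup>*\<^sup>* (fill d A) (fill d B)"
  by (induction rule: rtranclp_induct) (auto intro: rtranclp.rtrancl_into_rtrancl ns_ctx)

lemma nsS: "nonatomic X Y \<Longrightarrow> A = fill c X \<Longrightarrow> B = fill c Y \<Longrightarrow> ns\<^sup>*\<^sup>* A B"
  unfolding ns_def by blast

lemmas nst = rtranclp_trans[where r = ns]
declare nst[trans]

lemma addT: "ns\<^sup>*\<^sup>* A (Dis A TT)"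
proof -
  have 1: "ns\<^sup>*\<^sup>* A (Con A TT)"
    by (rule nsS[of _ _ _ Hole]) (auto intro: nonatomic.eq_bw eqn.unit_con)
  have 2: "ns\<^sup>*\<^sup>* (Con A TT) (Con A (Dis TT TT))"
    by (rule nsS[of TT _ _ "ConR A Hole"]) (auto intro: nonatomic.eq_bw eqn.tt)
  have 3: "ns\<^sup>*\<^sup>* (Con A (Dis TT TT)) (Dis (Con A TT) TT)"
    by (rule nsS[of _ _ _ Hole]) (auto intro: nonatomic.switch)
  have 4: "ns\<^sup>*\<^sup>* (Dis (Con A TT) TT) (Dis A TT)"
    by (rule nsS[of "Con A TT" A _ "DisL Hole TT"]) (auto intro: nonatomic.eq_fw eqn.unit_con)
  show ?thesis using 1 2 3 4 by (meson nst)
qed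

lemma swap: "ns\<^sup>*\<^sup>* (Dis X (Dis Y R)) (Dis Y (Dis X R))"
proof -
  have 1: "ns\<^sup>*\<^sup>* (Dis X (Dis Y R)) (Dis (Dis X Y) R)"
    by (rule nsS[of _ _ _ Hole]) (auto intro: nonatomic.eq_bw eqn.assoc_dis)
  have 2: "ns\<^sup>*\<^sup>* (Dis (Dis X Y) R) (Dis (Dis Y X) R)"
    by (rule nsS[of "Dis X Y" _ _ "DisL Hole R"]) (auto intro: nonatomic.eq_fw eqn.comm_dis)
  have 3: "ns\<^sup>*\<^sup>* (Dis (Dis Y X) R) (Dis Y (Dis X R))"
    by (rule nsS[of _ _ _ Hole]) (auto intro: nonatomic.eq_fw eqn.assoc_dis)
  show ?thesis using 1 2 3 by (meson nst)
qed

lemma cocon_fix: "ns\<^sup>*\<^sup>* (Con Y Z) (Dis Y (Dis Z TT))"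
proof -
  have 1: "ns\<^sup>*\<^sup>* (Con Y Z) (Dis (Con Y Z) TT)" by (rule addT)
  have 2: "ns\<^sup>*\<^sup>* (Dis (Con Y Z) TT) (Dis (Con Y Z) (Con TT TT))"
    by (rule nsS[of TT _ _ "DisR (Con Y Z) Hole"]) (auto intro: nonatomic.eq_bw eqn.unit_con)
  have 3: "ns\<^sup>*\<^sup>* (Dis (Con Y Z) (Con TT TT)) (Con (Dis Y TT) (Dis Z TT))"
    by (rule nsS[of _ _ _ Hole]) (auto intro: nonatomic.medial)
  have 4: "ns\<^sup>*\<^sup>* (Con (Dis Y TT) (Dis Z TT)) (Con (Dis Y TT) (Dis TT Z))"
    by (rule nsS[of "Dis Z TT" _ _ "ConR (Dis Y TT) Hole"]) (auto intro: nonatomic.eq_fw eqn.comm_dis)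
  have 5: "ns\<^sup>*\<^sup>* (Con (Dis Y TT) (Dis TT Z)) (Dis (Con (Dis Y TT) TT) Z)"
    by (rule nsS[of _ _ _ Hole]) (auto intro: nonatomic.switch)
  have 6: "ns\<^sup>*\<^sup>* (Dis (Con (Dis Y TT) TT) Z) (Dis (Dis Y TT) Z)"
    by (rule nsS[of "Con (Dis Y TT) TT" _ _ "DisL Hole Z"]) (auto intro: nonatomic.eq_fw eqn.unit_con)
  have 7: "ns\<^sup>*\<^sup>* (Dis (Dis Y TT) Z) (Dis Y (Dis TT Z))"
    by (rule nsS[of _ _ _ Hole]) (auto intro: nonatomic.eq_fw eqn.assoc_dis)
  have 8: "ns\<^sup>*\<^sup>* (Dis Y (Dis TT Z)) (Dis Y (Dis Z TT))"
    by (rule nsS[of "Dis TT Z" _ _ "DisR Y Hole"]) (auto intro: nonatomic.eq_fw eqn.comm_dis)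
  show ?thesis using 1 2 3 4 5 6 7 8 by (meson nst)
qed

lemma cut_fix: "ns\<^sup>*\<^sup>* (Dis X Y) (Dis (Dis (Con Y X) TT) TT)"
proof -
  have 1: "ns\<^sup>*\<^sup>* (Dis X Y) (Dis (Con X TT) Y)"
    by (rule nsS[of X _ _ "DisL Hole Y"]) (auto intro: nonatomic.eq_bw eqn.unit_con)
  have 2: "ns\<^sup>*\<^sup>* (Dis (Con X TT) Y) (Dis (Con X TT) (Con Y TT))"
    by (rule nsS[of Y _ _ "DisR (Con X TT) Hole"]) (auto intro: nonatomic.eq_bw eqn.unit_con)
  have 3: "ns\<^sup>*\<^sup>* (Dis (Con X TT) (Con Y TT)) (Dis (Con X TT) (Con TT Y))"
    by (rule nsS[of "Con Y TT" _ _ "DisR (Con X TT) Hole"]) (auto intro: nonatomic.eq_fw eqn.comm_con)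
  have 4: "ns\<^sup>*\<^sup>* (Dis (Con X TT) (Con TT Y)) (Con (Dis X TT) (Dis TT Y))"
    by (rule nsS[of _ _ _ Hole]) (auto intro: nonatomic.medial)
  have 5: "ns\<^sup>*\<^sup>* (Con (Dis X TT) (Dis TT Y)) (Con (Dis X TT) (Dis Y TT))"
    by (rule nsS[of "Dis TT Y" _ _ "ConR (Dis X TT) Hole"]) (auto intro: nonatomic.eq_fw eqn.comm_dis)
  have 6: "ns\<^sup>*\<^sup>* (Con (Dis X TT) (Dis Y TT)) (Dis (Con (Dis X TT) Y) TT)"
    by (rule nsS[of _ _ _ Hole]) (auto intro: nonatomic.switch)
  have 7: "ns\<^sup>*\<^sup>* (Dis (Con (Dis X TT) Y) TT) (Dis (Con Y (Dis X TT)) TT)"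
    by (rule nsS[of "Con (Dis X TT) Y" _ _ "DisL Hole TT"]) (auto intro: nonatomic.eq_fw eqn.comm_con)
  have 8: "ns\<^sup>*\<^sup>* (Dis (Con Y (Dis X TT)) TT) (Dis (Dis (Con Y X) TT) TT)"
    by (rule nsS[of "Con Y (Dis X TT)" _ _ "DisL Hole TT"]) (auto intro: nonatomic.switch)
  show ?thesis using 1 2 3 4 5 6 7 8 by (meson nst)
qed

lemma cut_clean: "ns\<^sup>*\<^sup>* (Dis (Dis (Dis FF TT) TT) R) (Dis TT R)"
proof -
  have 1: "ns\<^sup>*\<^sup>* (Dis (Dis (Dis FF TT) TT) R) (Dis (Dis (Dis TT FF) TT) R)"
    by (rule nsS[of "Dis FF TT" _ _ "DisL (DisL Hole TT) R"]) (auto intro: nonatomic.eq_fw eqn.comm_dis)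
  have 2: "ns\<^sup>*\<^sup>* (Dis (Dis (Dis TT FF) TT) R) (Dis (Dis TT TT) R)"
    by (rule nsS[of "Dis TT FF" _ _ "DisL (DisL Hole TT) R"]) (auto intro: nonatomic.eq_fw eqn.unit_dis)
  have 3: "ns\<^sup>*\<^sup>* (Dis (Dis TT TT) R) (Dis TT R)"
    by (rule nsS[of "Dis TT TT" _ _ "DisL Hole R"]) (auto intro: nonatomic.eq_fw eqn.tt)
  show ?thesis using 1 2 3 by (meson nst)
qed


fun vlist :: "'a option list \<Rightarrow> 'a list" where
  "vlist [] = []"
| "vlist (None # ws) = vlist ws"
| "vlist (Some v # ws) = v # vlist ws"

lemma vlist_append[simp]: "vlist (xs @ ys) = vlist xs @ vlist ys"
  by (induction xs rule: vlist.induct) auto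

lemma vlist_remove1: "vlist (remove1 (Some x) L) = remove1 x (vlist L)"
  by (induction L rule: vlist.induct) auto

lemma set_vlist: "Some x \<in> set L \<longleftrightarrow> x \<in> set (vlist L)"
  by (induction L rule: vlist.induct) auto

lemma topo:
  assumes "finite r" "acyclic r"
  shows "finite S \<Longrightarrow> \<exists>vs. distinct vs \<and> set vs = S \<and>
     (\<forall>i<length vs. \<forall>u. (u, vs!i) \<in> r \<longrightarrow> u \<in> S \<longrightarrow> u \<in> set (take i vs))"
proof (induction "card S" arbitrary: S)
  case 0 then show ?case by (intro exI[of _ "[]"]) auto
next
  case (Suc n)
  then have "S \<noteq> {}" by auto
  then obtain x where "x \<in> S" by auto
  obtain m where m: "m \<in> S" "\<And>y. (y, m) \<in> r\<inverse> \<Longrightarrow> y \<notin> S"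
    using wfE_min[OF finite_acyclic_wf_converse[OF assms] \<open>x \<in> S\<close>] by blast
  have "n = card (S - {m})" using Suc m by simp
  from Suc.hyps(1)[OF this] Suc.prems obtain vs where vs: "distinct vs" "set vs = S - {m}"
     "\<forall>i<length vs. \<forall>u. (u, vs!i) \<in> r \<longrightarrow> u \<in> S - {m} \<longrightarrow> u \<in> set (take i vs)" by auto
  have irr: "(m, m) \<notin> r" using assms(2) unfolding acyclic_def by blast
  show ?case
  proof (intro exI[of _ "vs @ [m]"] conjI allI impI)
    show "distinct (vs @ [m])" "set (vs @ [m]) = S" using vs m by auto
    fix i u assume i: "i < length (vs @ [m])" and u: "(u, (vs @ [m]) ! i) \<in> r" "u \<in> S"
    show "u \<in> set (take i (vs @ [m]))"
    proof (cases "i < length vs")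
      case True
      then have "vs ! i \<in> S" using vs(2) nth_mem by fastforce
      then have "u \<noteq> m" using u m(2) True by (auto simp: nth_append)
      then show ?thesis using vs(3) True u by (auto simp: nth_append)
    next
      case False
      then have "i = length vs" using i by simp
      then show ?thesis using u irr vs(2) by auto
    qed
  qed
qed

lemma nth_notin_take: "distinct vs \<Longrightarrow> k < length vs \<Longrightarrow> vs ! k \<notin> set (take k vs)"
  by (auto simp: in_set_conv_nth nth_eq_iff_index_eq)

locale flw =
  fixes F :: "('v, 'e) flow" and enc :: "'e \<Rightarrow> nat" and pol :: "'e \<Rightarrow> bool"
  assumes af: "atomic_flow F" and inj: "inj_on enc (fE F)"
  and polc: "\<forall>v \<in> fV F.
          (eta F v \<in> {Contraction, Cocontraction} \<longrightarrow>
             (\<forall>e \<in> upper_edges F v \<union> lower_edges F v.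
                \<forall>e' \<in> upper_edges F v \<union> lower_edges F v. pol e = pol e')) \<and>
          (eta F v = Interaction \<longrightarrow>
             (\<forall>e \<in> lower_edges F v. \<forall>e' \<in> lower_edges F v. e \<noteq> e' \<longrightarrow> pol e \<noteq> pol e')) \<and>
          (eta F v = Cut \<longrightarrow>
             (\<forall>e \<in> upper_edges F v. \<forall>e' \<in> upper_edges F v. e \<noteq> e' \<longrightarrow> pol e \<noteq> pol e'))"
begin

definition atm :: "'e \<Rightarrow> atom" where "atm e = (0, pol e)"

fun el :: "'e option \<Rightarrow> aform" where
  "el None = TT"
| "el (Some e) = At (atm e) (enc e)"

fun St :: "'e option list \<Rightarrow> aform" where
  "St [] = TT"
| "St (x # xs) = Dis (el x) (St xs)"

lemma labs_St: "labs (St L) = map enc (vlist L)"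
  by (induction L rule: vlist.induct) auto

definition at :: "aform \<Rightarrow> 'v \<Rightarrow> aform \<Rightarrow> bool" where
  "at A v B \<longleftrightarrow> (\<exists>c X Y. A = fill c X \<and> B = fill c Y \<and> atomic_rule (eta F v) X Y \<and>
     set (labs X) = enc ` upper_edges F v \<and> set (labs Y) = enc ` lower_edges F v \<and> distinct (labs B))"

lemma atI: "A = fill c X \<Longrightarrow> B = fill c Y \<Longrightarrow> atomic_rule (eta F v) X Y \<Longrightarrow>
     set (labs X) = enc ` upper_edges F v \<Longrightarrow> set (labs Y) = enc ` lower_edges F v \<Longrightarrow> distinct (labs B)
   \<Longrightarrow> at A v B"
  unfolding at_def by blast

definition blk :: "aform \<Rightarrow> 'v \<Rightarrow> aform \<Rightarrow> bool" where
  "blk A v B \<longleftrightarrow> (\<exists>A' B'. ns\<^sup>*\<^sup>* A A' \<and> at A' v B' \<and> ns\<^sup>*\<^sup>* B' B)"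

lemma moveF: "Some x \<in> set L \<Longrightarrow> ns\<^sup>*\<^sup>* (St L) (Dis (el (Some x)) (St (remove1 (Some x) L)))"
proof (induction L)
  case Nil then show ?case by simp
next
  case (Cons y ys)
  show ?case
  proof (cases "y = Some x")
    case True then show ?thesis by simp
  next
    case False
    then have "Some x \<in> set ys" using Cons.prems by simp
    from nss_ctx[OF Cons.IH[OF this], of "DisR (el y) Hole"]
    have "ns\<^sup>*\<^sup>* (St (y # ys)) (Dis (el y) (Dis (el (Some x)) (St (remove1 (Some x) ys))))" by simp
    also have "ns\<^sup>*\<^sup>* \<dots> (Dis (el (Some x)) (Dis (el y) (St (remove1 (Some x) ys))))" by (rule swap)
    finally show ?thesis using False by simp
  qed
qed

lemma dist_St: "distinct (vlist L) \<Longrightarrow> set (vlist L) \<subseteq> fE F \<Longrightarrow> distinct (labs (St L))"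
  using inj by (simp add: labs_St distinct_map inj_on_subset)

lemma dist_back: "ns\<^sup>*\<^sup>* B C \<Longrightarrow> distinct (labs C) \<Longrightarrow> distinct (labs B)"
  using nss_mset mset_eq_imp_distinct_iff by blast


lemma af_parts1: "finite (fE F)"
  using af unfolding atomic_flow_def by (elim conjE) assumption
lemma af_parts2: "\<forall>e \<in> fE F. (up F e = None \<or> the (up F e) \<in> fV F) \<and> (lo F e = None \<or> the (lo F e) \<in> fV F)"
  using af unfolding atomic_flow_def by (elim conjE) assumption
lemma af_parts3: "\<forall>v \<in> fV F. card (upper_edges F v) = fst (edge_numbers (eta F v)) \<and>
                  card (lower_edges F v) = snd (edge_numbers (eta F v))"
  using af unfolding atomic_flow_def by (elim conjE) assumption
lemma af_parts4: "acyclic (flow_graph F)"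
  using af unfolding atomic_flow_def by (elim conjE) assumption
lemmas af_parts = af_parts1 af_parts2 af_parts3 af_parts4

lemma finE: "finite (fE F)" by (rule af_parts(1))

lemma up_sub: "upper_edges F v \<subseteq> fE F" and lo_sub: "lower_edges F v \<subseteq> fE F"
  unfolding upper_edges_def lower_edges_def by auto

lemma cards: "v \<in> fV F \<Longrightarrow> card (upper_edges F v) = fst (edge_numbers (eta F v)) \<and>
    card (lower_edges F v) = snd (edge_numbers (eta F v))"
  using af_parts(3) by blast

lemma card0: "card (upper_edges F v) = 0 \<Longrightarrow> upper_edges F v = {}"
  "card (lower_edges F v) = 0 \<Longrightarrow> lower_edges F v = {}"
  using finite_subset[OF up_sub finE] finite_subset[OF lo_sub finE] by auto

definition post :: "'e option list \<Rightarrow> 'v \<Rightarrow> 'e option list \<Rightarrow> bool" where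
  "post L v L' \<longleftrightarrow> blk (St L) v (St L') \<and> distinct (vlist L') \<and>
     set (vlist L') = set (vlist L) - upper_edges F v \<union> lower_edges F v"

lemma blk_int:
  assumes v: "v \<in> fV F" "eta F v = Interaction" and d: "distinct (vlist L)" "set (vlist L) \<subseteq> fE F"
    and "upper_edges F v \<subseteq> set (vlist L)" and dj: "lower_edges F v \<inter> set (vlist L) = {}"
  shows "\<exists>L'. post L v L'"
proof -
  have up: "upper_edges F v = {}" using cards[OF v(1)] v(2) card0 by simp
  obtain p q where pq: "lower_edges F v = {p, q}" "p \<noteq> q"
    using cards[OF v(1)] v(2) by (auto simp: card_2_iff)
  have pol: "pol p \<noteq> pol q" using polc v pq by auto
  define L' where "L' = Some p # Some q # L"
  have dL': "distinct (vlist L')" "set (vlist L') = set (vlist L) - upper_edges F v \<union> lower_edges F v"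
    using d dj pq up by (auto simp: L'_def)
  have sub: "set (vlist L') \<subseteq> fE F" using dL' d lo_sub[of v] by auto
  have 1: "ns\<^sup>*\<^sup>* (St L) (Dis TT (St L))"
  proof -
    have "ns\<^sup>*\<^sup>* (St L) (Dis (St L) TT)" by (rule addT)
    also have "ns\<^sup>*\<^sup>* \<dots> (Dis TT (St L))"
      by (rule nsS[of _ _ _ Hole]) (auto intro: nonatomic.eq_fw eqn.comm_dis)
    finally show ?thesis .
  qed
  have 3: "ns\<^sup>*\<^sup>* (Dis (Dis (el (Some p)) (el (Some q))) (St L)) (St L')"
    unfolding L'_def by (rule nsS[of _ _ _ Hole]) (auto intro: nonatomic.eq_fw eqn.assoc_dis)
  have bar: "bar (atm p) = atm q" using pol by (auto simp: bar_def atm_def)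
  have 2: "at (Dis TT (St L)) v (Dis (Dis (el (Some p)) (el (Some q))) (St L))"
  proof (rule atI[of _ "DisL Hole (St L)" TT _ "Dis (el (Some p)) (el (Some q))"])
    show "atomic_rule (eta F v) TT (Dis (el (Some p)) (el (Some q)))"
      using atomic_rule.ai_down[of "atm p" "enc p" "enc q"] v(2) bar by simp
    show "distinct (labs (Dis (Dis (el (Some p)) (el (Some q))) (St L)))"
      using dist_back[OF 3 dist_St[OF dL'(1) sub]] .
  qed (auto simp: up pq)
  show ?thesis unfolding post_def blk_def using 1 2 3 dL' by blast
qed

lemma blk_w:
  assumes v: "v \<in> fV F" "eta F v = Weakening" and d: "distinct (vlist L)" "set (vlist L) \<subseteq> fE F"
    and "upper_edges F v \<subseteq> set (vlist L)" and dj: "lower_edges F v \<inter> set (vlist L) = {}"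
  shows "\<exists>L'. post L v L'"
proof -
  have up: "upper_edges F v = {}" using cards[OF v(1)] v(2) card0 by simp
  obtain p where pq: "lower_edges F v = {p}"
    using cards[OF v(1)] v(2) by (auto simp: card_1_singleton_iff)
  define L' where "L' = Some p # L"
  have dL': "distinct (vlist L')" "set (vlist L') = set (vlist L) - upper_edges F v \<union> lower_edges F v"
    using d dj pq up by (auto simp: L'_def)
  have sub: "set (vlist L') \<subseteq> fE F" using dL' d lo_sub[of v] by auto
  have 1: "ns\<^sup>*\<^sup>* (St L) (Dis FF (St L))"
  proof -
    have "ns\<^sup>*\<^sup>* (St L) (Dis (St L) FF)"
      by (rule nsS[of _ _ _ Hole]) (auto intro: nonatomic.eq_bw eqn.unit_dis)
    also have "ns\<^sup>*\<^sup>* \<dots> (Dis FF (St L))"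
      by (rule nsS[of _ _ _ Hole]) (auto intro: nonatomic.eq_fw eqn.comm_dis)
    finally show ?thesis .
  qed
  have 2: "at (Dis FF (St L)) v (St L')"
  proof (rule atI[of _ "DisL Hole (St L)" FF _ "el (Some p)"])
    show "atomic_rule (eta F v) FF (el (Some p))"
      using atomic_rule.aw_down[of "atm p" "enc p"] v(2) by simp
    show "distinct (labs (St L'))" using dist_St[OF dL'(1) sub] .
  qed (auto simp: up pq L'_def)
  show ?thesis unfolding post_def blk_def using 1 2 dL' by blast
qed

lemma blk_cw:
  assumes v: "v \<in> fV F" "eta F v = Coweakening" and d: "distinct (vlist L)" "set (vlist L) \<subseteq> fE F"
    and ul: "upper_edges F v \<subseteq> set (vlist L)" and dj: "lower_edges F v \<inter> set (vlist L) = {}"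
  shows "\<exists>L'. post L v L'"
proof -
  have lo: "lower_edges F v = {}" using cards[OF v(1)] v(2) card0 by simp
  obtain x where x: "upper_edges F v = {x}"
    using cards[OF v(1)] v(2) by (auto simp: card_1_singleton_iff)
  define L1 where "L1 = remove1 (Some x) L"
  define L' where "L' = None # L1"
  have xin: "Some x \<in> set L" using ul x by (simp add: set_vlist)
  have dL': "distinct (vlist L')" "set (vlist L') = set (vlist L) - upper_edges F v \<union> lower_edges F v"
    using d dj x lo by (auto simp: L'_def L1_def vlist_remove1)
  have sub: "set (vlist L') \<subseteq> fE F" using dL' d lo by auto
  have 1: "ns\<^sup>*\<^sup>* (St L) (Dis (el (Some x)) (St L1))" unfolding L1_def by (rule moveF[OF xin])
  have 2: "at (Dis (el (Some x)) (St L1)) v (St L')"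
  proof (rule atI[of _ "DisL Hole (St L1)" "el (Some x)" _ TT])
    show "atomic_rule (eta F v) (el (Some x)) TT"
      using atomic_rule.aw_up[of "atm x" "enc x"] v(2) by simp
    show "distinct (labs (St L'))" using dist_St[OF dL'(1) sub] .
  qed (auto simp: lo x L'_def)
  show ?thesis unfolding post_def blk_def using 1 2 dL' by blast
qed


lemma blk_c:
  assumes v: "v \<in> fV F" "eta F v = Contraction" and d: "distinct (vlist L)" "set (vlist L) \<subseteq> fE F"
    and ul: "upper_edges F v \<subseteq> set (vlist L)" and dj: "lower_edges F v \<inter> set (vlist L) = {}"
  shows "\<exists>L'. post L v L'"
proof -
  obtain z where z: "lower_edges F v = {z}"
    using cards[OF v(1)] v(2) by (auto simp: card_1_singleton_iff)
  obtain x y where xy: "upper_edges F v = {x, y}" "x \<noteq> y"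
    using cards[OF v(1)] v(2) by (auto simp: card_2_iff)
  have pol: "pol x = pol z" "pol y = pol z" using polc v xy z by auto
  define L1 where "L1 = remove1 (Some x) L"
  define L2 where "L2 = remove1 (Some y) L1"
  define L' where "L' = Some z # L2"
  have xin: "Some x \<in> set L" using ul xy by (simp add: set_vlist)
  have yin: "Some y \<in> set L1" using ul xy d by (simp add: set_vlist L1_def vlist_remove1)
  have dL': "distinct (vlist L')" "set (vlist L') = set (vlist L) - upper_edges F v \<union> lower_edges F v"
    using d dj xy z by (auto simp: L'_def L1_def L2_def vlist_remove1)
  have sub: "set (vlist L') \<subseteq> fE F" using dL' d lo_sub[of v] by auto
  have 1: "ns\<^sup>*\<^sup>* (St L) (Dis (Dis (el (Some x)) (el (Some y))) (St L2))"
  proof -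
    have "ns\<^sup>*\<^sup>* (St L) (Dis (el (Some x)) (St L1))" unfolding L1_def by (rule moveF[OF xin])
    also have "ns\<^sup>*\<^sup>* \<dots> (Dis (el (Some x)) (Dis (el (Some y)) (St L2)))"
      using nss_ctx[OF moveF[OF yin], of "DisR (el (Some x)) Hole"] by (simp add: L2_def)
    also have "ns\<^sup>*\<^sup>* \<dots> (Dis (Dis (el (Some x)) (el (Some y))) (St L2))"
      by (rule nsS[of _ _ _ Hole]) (auto intro: nonatomic.eq_bw eqn.assoc_dis)
    finally show ?thesis .
  qed
  have 2: "at (Dis (Dis (el (Some x)) (el (Some y))) (St L2)) v (St L')"
  proof (rule atI[of _ "DisL Hole (St L2)" "Dis (el (Some x)) (el (Some y))" _ "el (Some z)"])
    show "atomic_rule (eta F v) (Dis (el (Some x)) (el (Some y))) (el (Some z))"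
      using atomic_rule.ac_down[of "atm z" "enc x" "enc y" "enc z"] v(2) pol by (simp add: atm_def)
    show "distinct (labs (St L'))" using dist_St[OF dL'(1) sub] .
  qed (auto simp: xy z L'_def)
  show ?thesis unfolding post_def blk_def using 1 2 dL' by blast
qed

lemma blk_cc:
  assumes v: "v \<in> fV F" "eta F v = Cocontraction" and d: "distinct (vlist L)" "set (vlist L) \<subseteq> fE F"
    and ul: "upper_edges F v \<subseteq> set (vlist L)" and dj: "lower_edges F v \<inter> set (vlist L) = {}"
  shows "\<exists>L'. post L v L'"
proof -
  obtain x where x: "upper_edges F v = {x}"
    using cards[OF v(1)] v(2) by (auto simp: card_1_singleton_iff)
  obtain y z where yz: "lower_edges F v = {y, z}" "y \<noteq> z"
    using cards[OF v(1)] v(2) by (auto simp: card_2_iff)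
  have pol: "pol y = pol x" "pol z = pol x" using polc v x yz by auto
  define L1 where "L1 = remove1 (Some x) L"
  define L' where "L' = Some y # Some z # None # L1"
  have xin: "Some x \<in> set L" using ul x by (simp add: set_vlist)
  have dL': "distinct (vlist L')" "set (vlist L') = set (vlist L) - upper_edges F v \<union> lower_edges F v"
    using d dj x yz by (auto simp: L'_def L1_def vlist_remove1)
  have sub: "set (vlist L') \<subseteq> fE F" using dL' d lo_sub[of v] by auto
  have 1: "ns\<^sup>*\<^sup>* (St L) (Dis (el (Some x)) (St L1))" unfolding L1_def by (rule moveF[OF xin])
  have 3: "ns\<^sup>*\<^sup>* (Dis (Con (el (Some y)) (el (Some z))) (St L1)) (St L')"
  proof -
    have "ns\<^sup>*\<^sup>* (Dis (Con (el (Some y)) (el (Some z))) (St L1))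
           (Dis (Dis (el (Some y)) (Dis (el (Some z)) TT)) (St L1))"
      using nss_ctx[OF cocon_fix, of "DisL Hole (St L1)"] by simp
    also have "ns\<^sup>*\<^sup>* \<dots> (Dis (el (Some y)) (Dis (Dis (el (Some z)) TT) (St L1)))"
      by (rule nsS[of _ _ _ Hole]) (auto intro: nonatomic.eq_fw eqn.assoc_dis)
    also have "ns\<^sup>*\<^sup>* \<dots> (Dis (el (Some y)) (Dis (el (Some z)) (Dis TT (St L1))))"
      by (rule nsS[of _ _ _ "DisR (el (Some y)) Hole"]) (auto intro: nonatomic.eq_fw eqn.assoc_dis)
    finally show ?thesis by (simp add: L'_def)
  qed
  have 2: "at (Dis (el (Some x)) (St L1)) v (Dis (Con (el (Some y)) (el (Some z))) (St L1))"
  proof (rule atI[of _ "DisL Hole (St L1)" "el (Some x)" _ "Con (el (Some y)) (el (Some z))"])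
    show "atomic_rule (eta F v) (el (Some x)) (Con (el (Some y)) (el (Some z)))"
      using atomic_rule.ac_up[of "atm x" "enc x" "enc y" "enc z"] v(2) pol by (simp add: atm_def)
    show "distinct (labs (Dis (Con (el (Some y)) (el (Some z))) (St L1)))"
      using dist_back[OF 3 dist_St[OF dL'(1) sub]] .
  qed (auto simp: x yz)
  show ?thesis unfolding post_def blk_def using 1 2 3 dL' by blast
qed

lemma blk_cut:
  assumes v: "v \<in> fV F" "eta F v = Cut" and d: "distinct (vlist L)" "set (vlist L) \<subseteq> fE F"
    and ul: "upper_edges F v \<subseteq> set (vlist L)" and dj: "lower_edges F v \<inter> set (vlist L) = {}"
  shows "\<exists>L'. post L v L'"
proof -
  have lo: "lower_edges F v = {}" using cards[OF v(1)] v(2) card0 by simp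
  obtain x y where xy: "upper_edges F v = {x, y}" "x \<noteq> y"
    using cards[OF v(1)] v(2) by (auto simp: card_2_iff)
  have pol: "pol x \<noteq> pol y" using polc v xy by auto
  define L1 where "L1 = remove1 (Some x) L"
  define L2 where "L2 = remove1 (Some y) L1"
  define L' where "L' = None # L2"
  define R where "R = St L2"
  define X where "X = el (Some x)"
  define Y where "Y = el (Some y)"
  have xin: "Some x \<in> set L" using ul xy by (simp add: set_vlist)
  have yin: "Some y \<in> set L1" using ul xy d by (simp add: set_vlist L1_def vlist_remove1)
  have dL': "distinct (vlist L')" "set (vlist L') = set (vlist L) - upper_edges F v \<union> lower_edges F v"
    using d dj xy lo by (auto simp: L'_def L1_def L2_def vlist_remove1)
  have sub: "set (vlist L') \<subseteq> fE F" using dL' d lo by auto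
  have 1: "ns\<^sup>*\<^sup>* (St L) (Dis (Dis (Dis (Con Y X) TT) TT) R)"
  proof -
    have "ns\<^sup>*\<^sup>* (St L) (Dis X (St L1))" unfolding L1_def X_def by (rule moveF[OF xin])
    also have "ns\<^sup>*\<^sup>* \<dots> (Dis X (Dis Y R))"
      using nss_ctx[OF moveF[OF yin], of "DisR X Hole"] by (simp add: L2_def R_def Y_def)
    also have "ns\<^sup>*\<^sup>* \<dots> (Dis (Dis X Y) R)"
      by (rule nsS[of _ _ _ Hole]) (auto intro: nonatomic.eq_bw eqn.assoc_dis)
    also have "ns\<^sup>*\<^sup>* \<dots> (Dis (Dis (Dis (Con Y X) TT) TT) R)"
      using nss_ctx[OF cut_fix, of "DisL Hole R"] by simp
    finally show ?thesis .
  qed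
  have 3: "ns\<^sup>*\<^sup>* (Dis (Dis (Dis FF TT) TT) R) (St L')"
    using cut_clean by (simp add: L'_def R_def)
  have bar: "bar (atm y) = atm x" using pol by (auto simp: bar_def atm_def)
  have 2: "at (Dis (Dis (Dis (Con Y X) TT) TT) R) v (Dis (Dis (Dis FF TT) TT) R)"
  proof (rule atI[of _ "DisL (DisL (DisL Hole TT) TT) R" "Con Y X" _ FF])
    show "atomic_rule (eta F v) (Con Y X) FF"
      using atomic_rule.ai_up[of "atm y" "enc y" "enc x"] v(2) bar by (simp add: X_def Y_def)
    show "distinct (labs (Dis (Dis (Dis FF TT) TT) R))"
      using dist_back[OF 3 dist_St[OF dL'(1) sub]] .
  qed (auto simp: xy lo X_def Y_def)
  show ?thesis unfolding post_def blk_def using 1 2 3 dL' by blast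
qed

lemma blk_all:
  assumes v: "v \<in> fV F" and d: "distinct (vlist L)" "set (vlist L) \<subseteq> fE F"
    and ul: "upper_edges F v \<subseteq> set (vlist L)" and dj: "lower_edges F v \<inter> set (vlist L) = {}"
  shows "\<exists>L'. post L v L'"
  using blk_int[OF v _ d ul dj] blk_w[OF v _ d ul dj] blk_cw[OF v _ d ul dj]
    blk_c[OF v _ d ul dj] blk_cc[OF v _ d ul dj] blk_cut[OF v _ d ul dj]
  by (cases "eta F v") auto


inductive der :: "aform \<Rightarrow> 'v list \<Rightarrow> aform \<Rightarrow> bool" where
  der_nil: "der A [] A"
| der_snoc: "der A vs B \<Longrightarrow> blk B v C \<Longrightarrow> der A (vs @ [v]) C"

definition alive :: "'v set \<Rightarrow> 'e set" where
  "alive T = {e \<in> fE F. (up F e = None \<or> (\<exists>u\<in>T. up F e = Some u)) \<and> (\<forall>u\<in>T. lo F e \<noteq> Some u)}"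

lemma up_in: "e \<in> fE F \<Longrightarrow> up F e = Some u \<Longrightarrow> u \<in> fV F"
  using af_parts(2) by fastforce

lemma lo_in: "e \<in> fE F \<Longrightarrow> lo F e = Some u \<Longrightarrow> u \<in> fV F"
  using af_parts(2) by fastforce

lemma acyc: "acyclic (flow_graph F)" by (rule af_parts(4))

lemma fin_graph: "finite (flow_graph F)"
proof -
  have "flow_graph F \<subseteq> (\<lambda>e. (the (up F e), the (lo F e))) ` fE F"
    unfolding flow_graph_def by force
  then show ?thesis using finE finite_subset by blast
qed

lemma loop:
  assumes vs: "distinct vs" "set vs = fV F"
    "\<forall>i<length vs. \<forall>u. (u, vs!i) \<in> flow_graph F \<longrightarrow> u \<in> fV F \<longrightarrow> u \<in> set (take i vs)"
    and L0: "distinct (vlist L0)" "set (vlist L0) = alive {}"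
  shows "k \<le> length vs \<Longrightarrow> \<exists>L. der (St L0) (take k vs) (St L) \<and> distinct (vlist L) \<and>
     set (vlist L) = alive (set (take k vs))"
proof (induction k)
  case 0 then show ?case using L0 by (auto intro: der_nil)
next
  case (Suc k)
  then obtain L where L: "der (St L0) (take k vs) (St L)" "distinct (vlist L)"
     "set (vlist L) = alive (set (take k vs))" by auto
  define v where "v = vs ! k"
  define T where "T = set (take k vs)"
  have k: "k < length vs" using Suc by simp
  have tk: "take (Suc k) vs = take k vs @ [v]" using k by (simp add: v_def take_Suc_conv_app_nth)
  have vV: "v \<in> fV F" using k vs(2) v_def nth_mem by fastforce
  have vT: "v \<notin> T" using nth_notin_take[OF vs(1) k] by (simp add: v_def T_def)
  have sub: "set (vlist L) \<subseteq> fE F" using L(3) by (auto simp: alive_def)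
  have ul: "upper_edges F v \<subseteq> set (vlist L)"
  proof
    fix e assume e: "e \<in> upper_edges F v"
    then have eE: "e \<in> fE F" and lo: "lo F e = Some v" by (auto simp: upper_edges_def)
    have "up F e = None \<or> (\<exists>u\<in>T. up F e = Some u)"
    proof (cases "up F e")
      case (Some u)
      then have "(u, v) \<in> flow_graph F" using eE lo by (auto simp: flow_graph_def)
      then have "u \<in> T" using vs(3)[rule_format, OF k, of u] up_in[OF eE Some] by (simp add: v_def T_def)
      then show ?thesis using Some by auto
    qed auto
    then show "e \<in> set (vlist L)" using L(3) eE lo vT by (auto simp: alive_def T_def)
  qed
  have dj: "lower_edges F v \<inter> set (vlist L) = {}"
    using L(3) vT by (auto simp: alive_def lower_edges_def T_def)
  obtain L' where P: "post L v L'" using blk_all[OF vV L(2) sub ul dj] by blast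
  have al: "alive (set (take (Suc k) vs)) = set (vlist L) - upper_edges F v \<union> lower_edges F v"
  proof -
    have lowok: "\<forall>u\<in>insert v T. lo F e \<noteq> Some u" if e: "e \<in> fE F" "up F e = Some v" for e
    proof
      fix u assume u: "u \<in> insert v T"
      show "lo F e \<noteq> Some u"
      proof
        assume lo: "lo F e = Some u"
        then have g: "(v, u) \<in> flow_graph F" using e by (auto simp: flow_graph_def)
        show False
        proof (cases "u = v")
          case True then show False using g acyc unfolding acyclic_def by blast
        next
          case False
          then have "u \<in> T" using u by simp
          then obtain j where j: "j < k" "u = vs ! j" unfolding T_def
            by (auto simp: in_set_conv_nth)
          have jl: "j < length vs" using j k by simp
          have "v \<in> set (take j vs)" using vs(3)[rule_format, OF jl, of v] g j(2) vV by simp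
          moreover have "set (take j vs) \<subseteq> T" unfolding T_def using j
            by (metis order.strict_implies_order set_take_subset_set_take)
          ultimately show False using vT by auto
        qed
      qed
    qed
    show ?thesis unfolding L(3) tk
      by (auto simp: alive_def upper_edges_def lower_edges_def T_def[symmetric] lowok)
  qed
  from P have b: "blk (St L) v (St L')" and dd: "distinct (vlist L')"
    and ss: "set (vlist L') = set (vlist L) - upper_edges F v \<union> lower_edges F v"
    unfolding post_def by auto
  have "der (St L0) (take (Suc k) vs) (St L')" using der_snoc[OF L(1) b] tk by simp
  then show ?case using dd ss al by blast
qed


end



context flw begin

definition stp :: "aform \<Rightarrow> 'v option \<Rightarrow> aform \<Rightarrow> bool" where
  "stp A w B = (case w of None \<Rightarrow> ns A B \<and> distinct (labs A) \<and> distinct (labs B)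
     | Some v \<Rightarrow> at A v B \<and> distinct (labs A))"

primrec chain :: "aform \<Rightarrow> 'v option list \<Rightarrow> aform list \<Rightarrow> bool" where
  "chain A [] fs = (fs = [])"
| "chain A (w # ws) fs = (case fs of [] \<Rightarrow> False | B # fs' \<Rightarrow> stp A w B \<and> chain B ws fs')"

lemma chain_app: "chain A ws1 fs1 \<Longrightarrow> chain (last (A # fs1)) ws2 fs2 \<Longrightarrow> chain A (ws1 @ ws2) (fs1 @ fs2)"
proof (induction fs1 arbitrary: A ws1)
  case Nil then show ?case by (cases ws1) auto
next
  case (Cons B fs1) then show ?case by (cases ws1) auto
qed

lemma stp_dist: "stp A w B \<Longrightarrow> distinct (labs B)"
  by (cases w) (auto simp: at_def stp_def)

lemma chain_last_dist: "chain A ws fs \<Longrightarrow> distinct (labs A) \<Longrightarrow> distinct (labs (last (A # fs)))"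
proof (induction fs arbitrary: A ws)
  case Nil then show ?case by simp
next
  case (Cons B fs) then show ?case by (cases ws) (auto dest: stp_dist)
qed

lemma nss_chain: "ns\<^sup>*\<^sup>* A B \<Longrightarrow> distinct (labs A) \<Longrightarrow> \<exists>ws fs. chain A ws fs \<and> last (A # fs) = B \<and> vlist ws = []"
proof (induction rule: converse_rtranclp_induct)
  case base then show ?case by (intro exI[of _ "[]"]) auto
next
  case (step A A')
  have d: "distinct (labs A')" using step ns_mset mset_eq_imp_distinct_iff by metis
  from step.IH[OF d] obtain ws fs where "chain A' ws fs" "last (A' # fs) = B" "vlist ws = []" by blast
  then show ?case using step d by (intro exI[of _ "None # ws"] exI[of _ "A' # fs"]) (auto simp: stp_def)
qed

lemma blk_chain: "blk A v B \<Longrightarrow> distinct (labs A) \<Longrightarrow> \<exists>ws fs. chain A ws fs \<and> last (A # fs) = B \<and> vlist ws = [v]"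
proof -
  assume "blk A v B" "distinct (labs A)"
  then obtain A' B' where ab: "ns\<^sup>*\<^sup>* A A'" "at A' v B'" "ns\<^sup>*\<^sup>* B' B" "distinct (labs A)"
    unfolding blk_def by blast
  obtain ws1 fs1 where 1: "chain A ws1 fs1" "last (A # fs1) = A'" "vlist ws1 = []"
    using nss_chain[OF ab(1,4)] by blast
  have dA': "distinct (labs A')" using 1 chain_last_dist ab(4) by metis
  have dB': "distinct (labs B')" using ab(2) unfolding at_def by blast
  obtain ws3 fs3 where 3: "chain B' ws3 fs3" "last (B' # fs3) = B" "vlist ws3 = []"
    using nss_chain[OF ab(3) dB'] by blast
  have 2: "chain A' [Some v] [B']" using ab(2) dA' by (simp add: stp_def)
  have "chain A (ws1 @ [Some v]) (fs1 @ [B'])" using chain_app[OF 1(1)] 1(2) 2 by simp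
  then have "chain A ((ws1 @ [Some v]) @ ws3) ((fs1 @ [B']) @ fs3)"
    using chain_app 3 by (metis last_snoc append_Cons last.simps list.distinct(1) last_appendR)
  moreover have "last (A # (fs1 @ [B']) @ fs3) = B" using 3(2) by (cases fs3) auto
  ultimately show ?thesis using 1(3) 3(3) by (intro exI[of _ "(ws1 @ [Some v]) @ ws3"] exI[of _ "(fs1 @ [B']) @ fs3"]) auto
qed

lemma der_chain: "der A vs B \<Longrightarrow> distinct (labs A) \<Longrightarrow> \<exists>ws fs. chain A ws fs \<and> last (A # fs) = B \<and> vlist ws = vs"
proof (induction rule: der.induct)
  case (der_nil A) then show ?case by (intro exI[of _ "[]"]) auto
next
  case (der_snoc A vs B v C)
  then obtain ws fs where 1: "chain A ws fs" "last (A # fs) = B" "vlist ws = vs" by blast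
  have dB: "distinct (labs B)" using 1 chain_last_dist der_snoc by metis
  obtain ws2 fs2 where 2: "chain B ws2 fs2" "last (B # fs2) = C" "vlist ws2 = [v]"
    using blk_chain[OF der_snoc(2) dB] by blast
  have "chain A (ws @ ws2) (fs @ fs2)" using chain_app[OF 1(1)] 1(2) 2(1) by simp
  moreover have "last (A # fs @ fs2) = C" using 1(2) 2(2) by (cases fs2) (auto simp: last_append)
  ultimately show ?case using 1(3) 2(3) by (intro exI[of _ "ws @ ws2"] exI[of _ "fs @ fs2"]) auto
qed

lemma chain_nth: "chain A ws fs \<Longrightarrow> length fs = length ws \<and> (\<forall>i<length ws. stp ((A # fs) ! i) (ws ! i) ((A # fs) ! Suc i))"
proof (induction fs arbitrary: A ws)
  case Nil then show ?case by (cases ws) auto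
next
  case (Cons B fs)
  then obtain w ws' where ws: "ws = w # ws'" "stp A w B" "chain B ws' fs" by (cases ws) auto
  have ih: "length fs = length ws' \<and> (\<forall>i<length ws'. stp ((B # fs) ! i) (ws' ! i) ((B # fs) ! Suc i))"
    using Cons.IH[OF ws(3)] .
  show ?case
  proof (intro conjI allI impI)
    show "length (B # fs) = length ws" using ih ws by simp
    fix i assume i: "i < length ws"
    show "stp ((A # B # fs) ! i) (ws ! i) ((A # B # fs) ! Suc i)"
    proof (cases i)
      case 0 then show ?thesis using ws by simp
    next
      case (Suc j) then show ?thesis using ws ih i by simp
    qed
  qed
qed

end



lemma dist_fill: "distinct (labs (fill c X)) \<Longrightarrow> set (labs (fill c FF)) \<inter> set (labs X) = {}"
proof -
  assume d: "distinct (labs (fill c X))"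
  have "mset (labs (fill c X)) = mset (labs (fill c FF) @ labs X)" using mset_fill[of c X] by simp
  then have "distinct (labs (fill c FF) @ labs X)" using d mset_eq_imp_distinct_iff by metis
  then show ?thesis by simp
qed

lemma take_vl: "j \<le> i \<Longrightarrow> set (vlist (take j ws)) \<subseteq> set (vlist (take i ws))"
proof -
  assume "j \<le> i"
  then have "take i ws = take j ws @ drop j (take i ws)"
    by (metis append_take_drop_id min.absorb1 take_take)
  then have "vlist (take i ws) = vlist (take j ws) @ vlist (drop j (take i ws))"
    by (metis vlist_append)
  then show ?thesis by auto
qed

lemma vl_split: "i < length ws \<Longrightarrow> ws ! i = Some v \<Longrightarrow> vlist ws = vlist (take i ws) @ v # vlist (drop (Suc i) ws)"
proof -
  assume i: "i < length ws" "ws ! i = Some v"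
  have "ws = take i ws @ Some v # drop (Suc i) ws" using id_take_nth_drop[OF i(1)] i(2) by simp
  then have "vlist ws = vlist (take i ws @ Some v # drop (Suc i) ws)" by simp
  then show ?thesis by simp
qed

context flw begin

context
  fixes A :: aform and ws :: "'v option list" and fs :: "aform list" and vs :: "'v list"
  assumes ch: "chain A ws fs" and dA: "distinct (labs A)" and vl: "vlist ws = vs"
    and dvs: "distinct vs" and svs: "set vs = fV F"
    and s0: "set (labs A) = enc ` {e \<in> fE F. up F e = None}"
    and sl: "set (labs (last (A # fs))) = enc ` {e \<in> fE F. lo F e = None}"
begin

lemma len: "length fs = length ws" using chain_nth[OF ch] by simp

lemma stpi: "i < length ws \<Longrightarrow> stp ((A # fs) ! i) (ws ! i) ((A # fs) ! Suc i)"
  using chain_nth[OF ch] by simp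

lemma distj: "j \<le> length ws \<Longrightarrow> distinct (labs ((A # fs) ! j))"
proof (cases j)
  case 0 then show ?thesis using dA by simp
next
  case (Suc i)
  assume "j \<le> length ws"
  then show ?thesis using stp_dist[OF stpi[of i]] Suc by simp
qed

lemma stepN: "i < length ws \<Longrightarrow> ws ! i = None \<Longrightarrow> set (labs ((A # fs) ! Suc i)) = set (labs ((A # fs) ! i))"
proof -
  assume "i < length ws" "ws ! i = None"
  then have "ns ((A # fs) ! i) ((A # fs) ! Suc i)" using stpi[of i] by (simp add: stp_def)
  then show ?thesis using ns_mset by (metis set_mset_mset)
qed

lemma stepS: "i < length ws \<Longrightarrow> ws ! i = Some v \<Longrightarrow> \<exists>c X Y. (A # fs) ! i = fill c X \<and> (A # fs) ! Suc i = fill c Y \<and>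
   atomic_rule (eta F v) X Y \<and> set (labs X) = enc ` upper_edges F v \<and> set (labs Y) = enc ` lower_edges F v \<and>
   set (labs (fill c FF)) \<inter> set (labs X) = {} \<and> set (labs (fill c FF)) \<inter> set (labs Y) = {}"
proof -
  assume i: "i < length ws" "ws ! i = Some v"
  then have s: "at ((A # fs) ! i) v ((A # fs) ! Suc i)" "distinct (labs ((A # fs) ! i))"
    using stpi[of i] by (auto simp: stp_def)
  then obtain c X Y where cXY: "(A # fs) ! i = fill c X" "(A # fs) ! Suc i = fill c Y"
    "atomic_rule (eta F v) X Y" "set (labs X) = enc ` upper_edges F v" "set (labs Y) = enc ` lower_edges F v"
    "distinct (labs ((A # fs) ! Suc i))"
    unfolding at_def by blast
  have "set (labs (fill c FF)) \<inter> set (labs X) = {}" using dist_fill s(2) cXY(1) by metis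
  moreover have "set (labs (fill c FF)) \<inter> set (labs Y) = {}" using dist_fill cXY(6) cXY(2) by metis
  ultimately show ?thesis using cXY by blast
qed

lemma notin_before: "i < length ws \<Longrightarrow> ws ! i = Some v \<Longrightarrow> v \<notin> set (vlist (take i ws))"
  using vl_split[of i ws v] vl dvs by auto

lemma posinj: "i < length ws \<Longrightarrow> j < length ws \<Longrightarrow> ws ! i = Some v \<Longrightarrow> ws ! j = Some v \<Longrightarrow> i = j"
proof -
  have *: "False" if "i < j" "j < length ws" "ws ! i = Some v" "ws ! j = Some v" for i j
  proof -
    have "take j ws ! i = Some v" using that by simp
    moreover have "i < length (take j ws)" using that by simp
    ultimately have "Some v \<in> set (take j ws)" by (metis nth_mem)
    then have "v \<in> set (vlist (take j ws))" by (simp add: set_vlist)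
    then show False using notin_before[OF that(2,4)] by simp
  qed
  assume "i < length ws" "j < length ws" "ws ! i = Some v" "ws ! j = Some v"
  then show "i = j"
  proof -
    assume a: "i < length ws" "j < length ws" "ws ! i = Some v" "ws ! j = Some v"
    show "i = j"
    proof (rule ccontr)
      assume "i \<noteq> j"
      then have "i < j \<or> j < i" by arith
      then show False using *[of i j] *[of j i] a by blast
    qed
  qed
qed

lemma inv: "j \<le> length ws \<Longrightarrow> set (labs ((A # fs) ! j)) \<subseteq>
   enc ` {e \<in> fE F. up F e = None \<or> (\<exists>u \<in> set (vlist (take j ws)). up F e = Some u)}"
proof (induction j)
  case 0 then show ?case using s0 by auto
next
  case (Suc j)
  then have j: "j < length ws" by simp
  have IH: "set (labs ((A # fs) ! j)) \<subseteq>
     enc ` {e \<in> fE F. up F e = None \<or> (\<exists>u \<in> set (vlist (take (Suc j) ws)). up F e = Some u)}"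
  proof -
    have "set (labs ((A # fs) ! j)) \<subseteq>
       enc ` {e \<in> fE F. up F e = None \<or> (\<exists>u \<in> set (vlist (take j ws)). up F e = Some u)}"
      using Suc.IH j by simp
    moreover have "{e \<in> fE F. up F e = None \<or> (\<exists>u \<in> set (vlist (take j ws)). up F e = Some u)} \<subseteq>
       {e \<in> fE F. up F e = None \<or> (\<exists>u \<in> set (vlist (take (Suc j) ws)). up F e = Some u)}"
      using take_vl[of j "Suc j" ws] by auto
    ultimately show ?thesis by blast
  qed
  show ?case
  proof (cases "ws ! j")
    case None then show ?thesis using stepN[OF j None] IH by simp
  next
    case (Some v)
    obtain c X Y where cXY: "(A # fs) ! j = fill c X" "(A # fs) ! Suc j = fill c Y"
      "set (labs Y) = enc ` lower_edges F v" using stepS[OF j Some] by blast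
    have vin: "v \<in> set (vlist (take (Suc j) ws))"
      using Some j by (simp add: take_Suc_conv_app_nth)
    have "set (labs ((A # fs) ! Suc j)) = set (labs (fill c FF)) \<union> set (labs Y)"
      using cXY(2) set_fill[of c Y] by simp
    moreover have "set (labs (fill c FF)) \<subseteq> set (labs ((A # fs) ! j))"
      using cXY(1) set_fill[of c X] by simp
    moreover have "set (labs Y) \<subseteq> enc ` {e \<in> fE F. up F e = None \<or> (\<exists>u \<in> set (vlist (take (Suc j) ws)). up F e = Some u)}"
      using cXY(3) vin lo_sub[of v] by (auto simp: lower_edges_def)
    ultimately show ?thesis using IH by blast
  qed
qed

lemma fresh: "i < length ws \<Longrightarrow> ws ! i = Some v \<Longrightarrow> j \<le> i \<Longrightarrow>
   enc ` lower_edges F v \<inter> set (labs ((A # fs) ! j)) = {}"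
proof (rule ccontr)
  assume i: "i < length ws" "ws ! i = Some v" "j \<le> i" and "enc ` lower_edges F v \<inter> set (labs ((A # fs) ! j)) \<noteq> {}"
  then obtain e where e: "e \<in> lower_edges F v" "enc e \<in> set (labs ((A # fs) ! j))" by blast
  have jl: "j \<le> length ws" using i by simp
  have "enc e \<in> enc ` {e \<in> fE F. up F e = None \<or> (\<exists>u \<in> set (vlist (take j ws)). up F e = Some u)}"
    using inv[OF jl] e(2) by blast
  then obtain e' where e': "e' \<in> fE F" "enc e = enc e'"
    "up F e' = None \<or> (\<exists>u \<in> set (vlist (take j ws)). up F e' = Some u)"
    by blast
  have "e = e'" using inj e'(1,2) e(1) lo_sub[of v] by (meson inj_onD subsetD)
  then have "v \<in> set (vlist (take j ws))" using e'(3) e(1) by (auto simp: lower_edges_def)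
  then show False using take_vl[OF i(3), of ws] notin_before[OF i(1,2)] by auto
qed

lemma sks: "sks_derivation (A # fs) (map (map_option (eta F)) ws)"
  unfolding sks_derivation_def
proof (intro conjI allI impI)
  show "A # fs \<noteq> []" by simp
  show "length (A # fs) = Suc (length (map (map_option (eta F)) ws))" using len by simp
  fix j assume "j < length (A # fs)"
  then show "distinct (labs ((A # fs) ! j))" using distj len by simp
next
  fix i assume i: "i < length (map (map_option (eta F)) ws)"
  then have i': "i < length ws" by simp
  {
    assume "map (map_option (eta F)) ws ! i = None"
    then have "ws ! i = None" using i' by simp
    then have "ns ((A # fs) ! i) ((A # fs) ! Suc i)" using stpi[OF i'] by (simp add: stp_def)
    then show "\<exists>c A' B. (A # fs) ! i = fill c A' \<and> (A # fs) ! Suc i = fill c B \<and> nonatomic A' B"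
      unfolding ns_def by blast
  next
    fix k assume "map (map_option (eta F)) ws ! i = Some k"
    then obtain v where v: "ws ! i = Some v" "k = eta F v" using i' by auto
    obtain c X Y where cXY: "(A # fs) ! i = fill c X" "(A # fs) ! Suc i = fill c Y"
      "atomic_rule (eta F v) X Y" "set (labs Y) = enc ` lower_edges F v" using stepS[OF i' v(1)] by blast
    have "\<forall>j \<le> i. \<forall>e \<in> set (labs Y). e \<notin> set (labs ((A # fs) ! j))"
      using fresh[OF i' v(1)] cXY(4) by blast
    then show "\<exists>c A' B. (A # fs) ! i = fill c A' \<and> (A # fs) ! Suc i = fill c B \<and> atomic_rule k A' B \<and>
              (\<forall>j \<le> i. \<forall>e \<in> set (labs B). e \<notin> set (labs ((A # fs) ! j)))"
      using cXY v(2) by blast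
  }
qed

lemma ex_pos: "v \<in> fV F \<Longrightarrow> \<exists>i<length ws. ws ! i = Some v"
proof -
  assume "v \<in> fV F"
  then have "Some v \<in> set ws" using svs vl set_vlist by metis
  then show ?thesis by (metis in_set_conv_nth)
qed

lemma enc_eq: "e \<in> fE F \<Longrightarrow> e' \<in> fE F \<Longrightarrow> enc e = enc e' \<Longrightarrow> e = e'"
  using inj by (meson inj_onD)

lemma in_enc: "e \<in> fE F \<Longrightarrow> M \<subseteq> fE F \<Longrightarrow> enc e \<in> enc ` M \<Longrightarrow> e \<in> M"
  using enc_eq by blast

lemma up_char: "e \<in> fE F \<Longrightarrow> up F e = Some v \<Longrightarrow>
   \<exists>i<length ws. ws ! i = Some v \<and> enc e \<notin> set (labs ((A # fs) ! i)) \<and> enc e \<in> set (labs ((A # fs) ! Suc i))"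
proof -
  assume e: "e \<in> fE F" "up F e = Some v"
  obtain i where i: "i < length ws" "ws ! i = Some v" using ex_pos up_in[OF e] by blast
  obtain c X Y where cXY: "(A # fs) ! i = fill c X" "(A # fs) ! Suc i = fill c Y"
      "set (labs Y) = enc ` lower_edges F v" using stepS[OF i] by blast
  have el: "e \<in> lower_edges F v" using e by (simp add: lower_edges_def)
  have "enc e \<in> set (labs ((A # fs) ! Suc i))" using cXY(2,3) set_fill[of c Y] el by simp
  moreover have "enc e \<notin> set (labs ((A # fs) ! i))" using fresh[OF i order.refl] el by blast
  ultimately show ?thesis using i by blast
qed

lemma up_uniq: "e \<in> fE F \<Longrightarrow> i < length ws \<Longrightarrow> enc e \<notin> set (labs ((A # fs) ! i)) \<Longrightarrow>
   enc e \<in> set (labs ((A # fs) ! Suc i)) \<Longrightarrow> \<exists>v. ws ! i = Some v \<and> up F e = Some v"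
proof -
  assume e: "e \<in> fE F" and i: "i < length ws" and n: "enc e \<notin> set (labs ((A # fs) ! i))"
    and y: "enc e \<in> set (labs ((A # fs) ! Suc i))"
  show ?thesis
  proof (cases "ws ! i")
    case None then show ?thesis using stepN[OF i] n y by simp
  next
    case (Some v)
    obtain c X Y where cXY: "(A # fs) ! i = fill c X" "(A # fs) ! Suc i = fill c Y"
      "set (labs Y) = enc ` lower_edges F v" using stepS[OF i Some] by blast
    have "enc e \<in> set (labs Y)" using n y cXY(1,2) set_fill[of c X] set_fill[of c Y] by auto
    then have "e \<in> lower_edges F v" using in_enc[OF e lo_sub] cXY(3) by simp
    then show ?thesis using Some by (simp add: lower_edges_def)
  qed
qed

lemma lo_char: "e \<in> fE F \<Longrightarrow> lo F e = Some v \<Longrightarrow>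
   \<exists>i<length ws. ws ! i = Some v \<and> enc e \<in> set (labs ((A # fs) ! i)) \<and> enc e \<notin> set (labs ((A # fs) ! Suc i))"
proof -
  assume e: "e \<in> fE F" "lo F e = Some v"
  obtain i where i: "i < length ws" "ws ! i = Some v" using ex_pos lo_in[OF e] by blast
  obtain c X Y where cXY: "(A # fs) ! i = fill c X" "(A # fs) ! Suc i = fill c Y"
      "set (labs X) = enc ` upper_edges F v" "set (labs Y) = enc ` lower_edges F v"
      "set (labs (fill c FF)) \<inter> set (labs X) = {}" using stepS[OF i] by blast
  have eu: "e \<in> upper_edges F v" using e by (simp add: upper_edges_def)
  have "e \<notin> lower_edges F v"
  proof
    assume "e \<in> lower_edges F v"
    then have "(v, v) \<in> flow_graph F" using e eu by (auto simp: lower_edges_def flow_graph_def)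
    then show False using acyc unfolding acyclic_def by blast
  qed
  then have "enc e \<notin> set (labs Y)" using cXY(4) in_enc[OF e(1) lo_sub] by blast
  moreover have "enc e \<in> set (labs X)" using cXY(3) eu by simp
  ultimately have "enc e \<in> set (labs ((A # fs) ! i)) \<and> enc e \<notin> set (labs ((A # fs) ! Suc i))"
    using cXY(1,2,5) set_fill[of c X] set_fill[of c Y] by auto
  then show ?thesis using i by blast
qed

lemma lo_uniq: "e \<in> fE F \<Longrightarrow> i < length ws \<Longrightarrow> enc e \<in> set (labs ((A # fs) ! i)) \<Longrightarrow>
   enc e \<notin> set (labs ((A # fs) ! Suc i)) \<Longrightarrow> \<exists>v. ws ! i = Some v \<and> lo F e = Some v"
proof -
  assume e: "e \<in> fE F" and i: "i < length ws" and y: "enc e \<in> set (labs ((A # fs) ! i))"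
    and n: "enc e \<notin> set (labs ((A # fs) ! Suc i))"
  show ?thesis
  proof (cases "ws ! i")
    case None then show ?thesis using stepN[OF i] n y by simp
  next
    case (Some v)
    obtain c X Y where cXY: "(A # fs) ! i = fill c X" "(A # fs) ! Suc i = fill c Y"
      "set (labs X) = enc ` upper_edges F v" using stepS[OF i Some] by blast
    have "enc e \<in> set (labs X)" using n y cXY(1,2) set_fill[of c X] set_fill[of c Y] by auto
    then have "e \<in> upper_edges F v" using in_enc[OF e up_sub] cXY(3) by simp
    then show ?thesis using Some by (simp add: upper_edges_def)
  qed
qed

lemma Eeq: "(\<Union>j<length (A # fs). set (labs ((A # fs) ! j))) = enc ` fE F"
proof
  show "(\<Union>j<length (A # fs). set (labs ((A # fs) ! j))) \<subseteq> enc ` fE F"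
  proof (rule UN_least)
    fix j assume "j \<in> {..<length (A # fs)}"
    then have "j \<le> length ws" using len by simp
    then show "set (labs ((A # fs) ! j)) \<subseteq> enc ` fE F" using inv by blast
  qed
  show "enc ` fE F \<subseteq> (\<Union>j<length (A # fs). set (labs ((A # fs) ! j)))"
  proof
    fix l assume "l \<in> enc ` fE F"
    then obtain e where e: "e \<in> fE F" "l = enc e" by blast
    show "l \<in> (\<Union>j<length (A # fs). set (labs ((A # fs) ! j)))"
    proof (cases "up F e")
      case None
      then have "l \<in> set (labs ((A # fs) ! 0))" using s0 e by auto
      then show ?thesis by fastforce
    next
      case (Some v)
      then obtain i where "i < length ws" "enc e \<in> set (labs ((A # fs) ! Suc i))"
        using up_char[OF e(1)] by blast
      then show ?thesis using e len by (metis (no_types, lifting) UN_iff length_Cons lessThan_iff not_less_eq)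
    qed
  qed
qed

lemma iso: "flow_iso (flow_of (A # fs) (map (map_option (eta F)) ws)) F"
proof -
  define ks where "ks = map (map_option (eta F)) ws"
  define f where "f = (\<lambda>i. the (ws ! i))"
  define g where "g = inv_into (fE F) enc"
  have lk: "length ks = length ws" by (simp add: ks_def)
  have V: "fV (flow_of (A # fs) ks) = {i. i < length ws \<and> ws ! i \<noteq> None}"
    by (auto simp: flow_of_def ks_def)
  have E: "fE (flow_of (A # fs) ks) = enc ` fE F"
    using Eeq by (simp add: flow_of_def)
  have bf: "bij_betw f {i. i < length ws \<and> ws ! i \<noteq> None} (fV F)"
    unfolding bij_betw_def
  proof
    show "inj_on f {i. i < length ws \<and> ws ! i \<noteq> None}"
    proof (rule inj_onI)
      fix i j assume i: "i \<in> {i. i < length ws \<and> ws ! i \<noteq> None}" and j: "j \<in> {i. i < length ws \<and> ws ! i \<noteq> None}"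
        and fij: "f i = f j"
      then obtain v where "ws ! i = Some v" by auto
      moreover have "ws ! j = Some v" using j fij calculation by (auto simp: f_def)
      ultimately show "i = j" using posinj i j by blast
    qed
    show "f ` {i. i < length ws \<and> ws ! i \<noteq> None} = fV F"
    proof
      show "f ` {i. i < length ws \<and> ws ! i \<noteq> None} \<subseteq> fV F"
      proof
        fix v assume "v \<in> f ` {i. i < length ws \<and> ws ! i \<noteq> None}"
        then obtain i where i: "i < length ws" "ws ! i = Some v" by (auto simp: f_def)
        then have "Some v \<in> set ws" by (metis nth_mem)
        then show "v \<in> fV F" using set_vlist vl svs by metis
      qed
      show "fV F \<subseteq> f ` {i. i < length ws \<and> ws ! i \<noteq> None}"
      proof
        fix v assume "v \<in> fV F"
        then obtain i where "i < length ws" "ws ! i = Some v" using ex_pos by blast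
        then show "v \<in> f ` {i. i < length ws \<and> ws ! i \<noteq> None}" by (force simp: f_def)
      qed
    qed
  qed
  have bg: "bij_betw g (enc ` fE F) (fE F)"
    unfolding g_def by (rule bij_betw_inv_into[OF inj_on_imp_bij_betw[OF inj]])
  have eta: "\<forall>i \<in> fV (flow_of (A # fs) ks). eta F (f i) = eta (flow_of (A # fs) ks) i"
    using V by (auto simp: flow_of_def ks_def f_def)
  have ud: "up F (g l) = map_option f (up (flow_of (A # fs) ks) l) \<and>
            lo F (g l) = map_option f (lo (flow_of (A # fs) ks) l)" if l: "l \<in> enc ` fE F" for l
  proof -
    obtain e where e: "e \<in> fE F" "l = enc e" using l by blast
    have ge: "g l = e" using e inj by (simp add: g_def inv_into_f_f)
    have upf: "up (flow_of (A # fs) ks) l = (if l \<in> set (labs A) then None else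
        Some (LEAST i. i < length ws \<and> l \<notin> set (labs ((A # fs) ! i)) \<and> l \<in> set (labs ((A # fs) ! Suc i))))"
      by (simp add: flow_of_def lk)
    have lof: "lo (flow_of (A # fs) ks) l = (if l \<in> set (labs (last (A # fs))) then None else
        Some (LEAST i. i < length ws \<and> l \<in> set (labs ((A # fs) ! i)) \<and> l \<notin> set (labs ((A # fs) ! Suc i))))"
      by (simp add: flow_of_def lk)
    have U: "up F e = map_option f (up (flow_of (A # fs) ks) l)"
    proof (cases "l \<in> set (labs A)")
      case True
      then have "up F e = None" using s0 e in_enc[OF e(1), of "{e \<in> fE F. up F e = None}"] by auto
      then show ?thesis using True upf by simp
    next
      case False
      then have "up F e \<noteq> None" using s0 e by auto
      then obtain v where v: "up F e = Some v" by auto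
      obtain i where i: "i < length ws" "ws ! i = Some v" "enc e \<notin> set (labs ((A # fs) ! i))"
        "enc e \<in> set (labs ((A # fs) ! Suc i))" using up_char[OF e(1) v] by blast
      have "(LEAST i. i < length ws \<and> l \<notin> set (labs ((A # fs) ! i)) \<and> l \<in> set (labs ((A # fs) ! Suc i))) = i"
      proof (rule Least_equality)
        show "i < length ws \<and> l \<notin> set (labs ((A # fs) ! i)) \<and> l \<in> set (labs ((A # fs) ! Suc i))"
          using i e by simp
        fix y assume y: "y < length ws \<and> l \<notin> set (labs ((A # fs) ! y)) \<and> l \<in> set (labs ((A # fs) ! Suc y))"
        then obtain v' where "ws ! y = Some v'" "up F e = Some v'" using up_uniq[OF e(1)] e by blast
        then have "y = i" using posinj i y v by auto
        then show "i \<le> y" by simp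
      qed
      then show ?thesis using False upf v i by (simp add: f_def)
    qed
    have L: "lo F e = map_option f (lo (flow_of (A # fs) ks) l)"
    proof (cases "l \<in> set (labs (last (A # fs)))")
      case True
      then have "lo F e = None" using sl e in_enc[OF e(1), of "{e \<in> fE F. lo F e = None}"] by auto
      then show ?thesis using True lof by simp
    next
      case False
      then have "lo F e \<noteq> None" using sl e by auto
      then obtain v where v: "lo F e = Some v" by auto
      obtain i where i: "i < length ws" "ws ! i = Some v" "enc e \<in> set (labs ((A # fs) ! i))"
        "enc e \<notin> set (labs ((A # fs) ! Suc i))" using lo_char[OF e(1) v] by blast
      have "(LEAST i. i < length ws \<and> l \<in> set (labs ((A # fs) ! i)) \<and> l \<notin> set (labs ((A # fs) ! Suc i))) = i"
      proof (rule Least_equality)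
        show "i < length ws \<and> l \<in> set (labs ((A # fs) ! i)) \<and> l \<notin> set (labs ((A # fs) ! Suc i))"
          using i e by simp
        fix y assume y: "y < length ws \<and> l \<in> set (labs ((A # fs) ! y)) \<and> l \<notin> set (labs ((A # fs) ! Suc y))"
        then obtain v' where "ws ! y = Some v'" "lo F e = Some v'" using lo_uniq[OF e(1)] e by blast
        then have "y = i" using posinj i y v by auto
        then show "i \<le> y" by simp
      qed
      then show ?thesis using False lof v i by (simp add: f_def)
    qed
    show ?thesis using U L ge by simp
  qed
  show ?thesis unfolding flow_iso_def ks_def[symmetric]
    using bf bg eta ud V E by (intro exI[of _ f] exI[of _ g]) auto
qed

end

end



lemma vlist_map_Some: "vlist (map Some xs) = xs"
  by (induction xs) auto

lemma (in flw) alive_empty: "alive {} = {e \<in> fE F. up F e = None}"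
  by (auto simp: alive_def)

lemma (in flw) alive_all: "alive (fV F) = {e \<in> fE F. lo F e = None}"
proof -
  have "e \<in> alive (fV F) \<longleftrightarrow> e \<in> {e \<in> fE F. lo F e = None}" for e
  proof
    assume "e \<in> alive (fV F)"
    then have e: "e \<in> fE F" "\<forall>u\<in>fV F. lo F e \<noteq> Some u" by (auto simp: alive_def)
    then show "e \<in> {e \<in> fE F. lo F e = None}" using lo_in[OF e(1)] by (cases "lo F e") auto
  next
    assume "e \<in> {e \<in> fE F. lo F e = None}"
    then have e: "e \<in> fE F" "lo F e = None" by auto
    then show "e \<in> alive (fV F)" using up_in[OF e(1)] by (cases "up F e") (auto simp: alive_def)
  qed
  then show ?thesis by blast
qed

theorem theorem3p8:
  fixes F :: "('v, 'e) flow"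
  assumes "atomic_flow F"
  shows "\<exists>fs ks. sks_derivation fs ks \<and> flow_iso (flow_of fs ks) F"
proof -
  have "\<exists>pol :: 'e \<Rightarrow> bool. \<forall>v \<in> fV F.
          (eta F v \<in> {Contraction, Cocontraction} \<longrightarrow>
             (\<forall>e \<in> upper_edges F v \<union> lower_edges F v.
                \<forall>e' \<in> upper_edges F v \<union> lower_edges F v. pol e = pol e')) \<and>
          (eta F v = Interaction \<longrightarrow>
             (\<forall>e \<in> lower_edges F v. \<forall>e' \<in> lower_edges F v. e \<noteq> e' \<longrightarrow> pol e \<noteq> pol e')) \<and>
          (eta F v = Cut \<longrightarrow>
             (\<forall>e \<in> upper_edges F v. \<forall>e' \<in> upper_edges F v. e \<noteq> e' \<longrightarrow> pol e \<noteq> pol e'))"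
    using assms unfolding atomic_flow_def by (elim conjE) assumption
  then obtain pol :: "'e \<Rightarrow> bool" where P: "\<forall>v \<in> fV F.
          (eta F v \<in> {Contraction, Cocontraction} \<longrightarrow>
             (\<forall>e \<in> upper_edges F v \<union> lower_edges F v.
                \<forall>e' \<in> upper_edges F v \<union> lower_edges F v. pol e = pol e')) \<and>
          (eta F v = Interaction \<longrightarrow>
             (\<forall>e \<in> lower_edges F v. \<forall>e' \<in> lower_edges F v. e \<noteq> e' \<longrightarrow> pol e \<noteq> pol e')) \<and>
          (eta F v = Cut \<longrightarrow>
             (\<forall>e \<in> upper_edges F v. \<forall>e' \<in> upper_edges F v. e \<noteq> e' \<longrightarrow> pol e \<noteq> pol e'))"
    by (rule exE)
  have finV: "finite (fV F)" using assms unfolding atomic_flow_def by (elim conjE) assumption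
  have finE: "finite (fE F)" using assms unfolding atomic_flow_def by (elim conjE) assumption
  obtain enc :: "'e \<Rightarrow> nat" and n where "enc ` fE F = {i. i < n}" and injE: "inj_on enc (fE F)"
    using finite_imp_inj_to_nat_seg[OF finE] by blast
  interpret flw F enc pol by (rule flw.intro[OF assms injE P])
  obtain vs where vs: "distinct vs" "set vs = fV F"
    "\<forall>i<length vs. \<forall>u. (u, vs!i) \<in> flow_graph F \<longrightarrow> u \<in> fV F \<longrightarrow> u \<in> set (take i vs)"
    using topo[OF fin_graph acyc finV] by blast
  obtain xs where xs: "set xs = {e \<in> fE F. up F e = None}" "distinct xs"
    using finite_distinct_list[of "{e \<in> fE F. up F e = None}"] finE by auto
  define L0 where "L0 = map Some xs"
  have L0: "distinct (vlist L0)" "set (vlist L0) = alive {}"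
    using xs by (auto simp: L0_def vlist_map_Some alive_empty)
  obtain L where L: "der (St L0) vs (St L)" "distinct (vlist L)" "set (vlist L) = alive (fV F)"
    using loop[OF vs L0, of "length vs"] vs(2) by auto
  have dA: "distinct (labs (St L0))" using dist_St L0 by (auto simp: alive_def)
  obtain ws fs where ch: "chain (St L0) ws fs" "last (St L0 # fs) = St L" "vlist ws = vs"
    using der_chain[OF L(1) dA] by blast
  have s0: "set (labs (St L0)) = enc ` {e \<in> fE F. up F e = None}"
    using xs by (simp add: labs_St L0_def vlist_map_Some)
  have sl: "set (labs (last (St L0 # fs))) = enc ` {e \<in> fE F. lo F e = None}"
    using ch(2) L(3) alive_all by (simp add: labs_St)
  show ?thesis using sks[OF ch(1) dA ch(3) vs(1,2) s0 sl] iso[OF ch(1) dA ch(3) vs(1,2) s0 sl] by blast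
qed

end
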